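(* Let $z$ lie in the upper half-plane and let $E_4,\Delta_{24}$ and $\rho_n$ be as in the context. Then for every positive integer $n$, $$\rho_n(z)=\sum_{i=0}^{\lfloor n/3\rfloor}\frac{2n+3}{2i+1}\binom{n-i}{2i}2^{8i}\Delta_{24}(z)^iE_4(z)^{n-3i}.$$
   Context: For $z$ with $\mathrm{Im}(z)>0$ put $q=e^{\pi\sqrt{-1}z}$ and define $\vartheta_2(z)=\sum_{m\in\mathbb{Z}}q^{(m+1/2)^2}$, $\vartheta_3(z)=\sum_{m\in\mathbb{Z}}q^{m^2}$, $\vartheta_4(z)=\sum_{m\in\mathbb{Z}}(-q)^{m^2}$. Define $E_4(z)=\frac12(\vartheta_2(z)^8+\vartheta_3(z)^8+\vartheta_4(z)^8)$, $\Delta_{24}(z)=\left(\frac{\vartheta_2(z)\vartheta_3(z)\vartheta_4(z)}{2}\right)^8$, and for a nonnegative integer $n$, $$\rho_n(z)=\frac{\vartheta_3(z)^{8(n+1)+4}-\vartheta_2(z)^{8(n+1)+4}-\vartheta_4(z)^{8(n+1)+4}}{(\vartheta_2(z)\vartheta_3(z)\vartheta_4(z))^4}.$$ *)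

theory Defs
  imports "HOL-Analysis.Analysis"
begin

text \<open>q = exp(pi i z); q powered to a real exponent r means exp(pi i z r).\<close>

definition theta2 :: "complex \<Rightarrow> complex" where
  "theta2 z = (\<Sum>\<^sub>\<infinity>m::int. exp (of_real pi * \<i> * z * (of_int m + 1/2)^2))"

definition theta3 :: "complex \<Rightarrow> complex" where
  "theta3 z = (\<Sum>\<^sub>\<infinity>m::int. exp (of_real pi * \<i> * z * (of_int m)^2))"

text \<open>(-q)^(m^2) = (-1)^(m^2) q^(m^2) = (-1)^m q^(m^2), m^2 being an integer.\<close>
definition theta4 :: "complex \<Rightarrow> complex" where
  "theta4 z = (\<Sum>\<^sub>\<infinity>m::int. (-1) ^ nat (m^2) * exp (of_real pi * \<i> * z * (of_int m)^2))"

definition E4 :: "complex \<Rightarrow> complex" where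
  "E4 z = (theta2 z ^ 8 + theta3 z ^ 8 + theta4 z ^ 8) / 2"

definition Delta24 :: "complex \<Rightarrow> complex" where
  "Delta24 z = ((theta2 z * theta3 z * theta4 z) / 2) ^ 8"

definition rho :: "nat \<Rightarrow> complex \<Rightarrow> complex" where
  "rho n z = (theta3 z ^ (8*(n+1)+4) - theta2 z ^ (8*(n+1)+4) - theta4 z ^ (8*(n+1)+4))
             / (theta2 z * theta3 z * theta4 z) ^ 4"

end

theory Submission
  imports Defs
begin


definition qeven :: "complex \<Rightarrow> complex \<Rightarrow> nat \<Rightarrow> complex" where
  "qeven D E n = (\<Sum>i\<le>n. of_nat ((n-i) choose (2*i)) * D^i * E^(n-3*i))"
definition qodd :: "complex \<Rightarrow> complex \<Rightarrow> nat \<Rightarrow> complex" where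
  "qodd D E n = (\<Sum>i\<le>n. of_nat ((n-i) choose (2*i+1)) * D^i * E^(n-Suc(3*i)))"

lemma oo_term: "of_nat ((n-i) choose (2*i+1)) * E * E^(n-Suc(3*i)) = of_nat ((n-i) choose (2*i+1)) * (E::complex)^(n-3*i)"
proof (cases "2*i+1 \<le> n-i")
  case True
  then have "n-3*i = Suc (n-Suc(3*i))" by arith
  then show ?thesis by simp
next
  case False
  then show ?thesis by simp
qed

lemma ee_term: "of_nat ((Suc n-i) choose (2*i)) * E * E^(Suc n-3*i) = of_nat ((Suc n-i) choose (2*i)) * (E::complex)^(Suc (Suc n)-3*i)"
proof (cases "2*i \<le> Suc n-i")
  case True
  then have "Suc (Suc n)-3*i = Suc (Suc n-3*i)" by arith
  then show ?thesis by simp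
next
  case False
  then show ?thesis by simp
qed

lemma oo_rec: "qodd D E (Suc n) = E * qodd D E n + qeven D E n"
proof -
  have "qodd D E (Suc n) = (\<Sum>i\<le>n. of_nat ((Suc n-i) choose (2*i+1)) * D^i * E^(Suc n-Suc(3*i)))"
    unfolding qodd_def by (simp add: sum.atMost_Suc)
  also have "\<dots> = (\<Sum>i\<le>n. of_nat ((n-i) choose (2*i+1)) * D^i * E^(n-3*i)
        + of_nat ((n-i) choose (2*i)) * D^i * E^(n-3*i))"
  proof (rule sum.cong[OF refl])
    fix i assume "i \<in> {..n}"
    then have "Suc n - i = Suc (n-i)" by auto
    then show "of_nat ((Suc n-i) choose (2*i+1)) * D^i * E^(Suc n-Suc(3*i)) = of_nat ((n-i) choose (2*i+1)) * D^i * E^(n-3*i)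
        + of_nat ((n-i) choose (2*i)) * D^i * E^(n-3*i)"
      by (simp add: algebra_simps)
  qed
  also have "\<dots> = E * qodd D E n + qeven D E n"
    unfolding qodd_def qeven_def sum.distrib sum_distrib_left
  proof (intro arg_cong2[where f="(+)"] sum.cong refl)
    fix i show "of_nat ((n-i) choose (2*i+1)) * D^i * E^(n-3*i) = E * (of_nat ((n-i) choose (2*i+1)) * D^i * E^(n-Suc(3*i)))"
    proof -
      have "E * (of_nat ((n-i) choose (2*i+1)) * D^i * E^(n-Suc(3*i))) = D^i * (of_nat ((n-i) choose (2*i+1)) * E * E^(n-Suc(3*i)))"
        by (simp add: algebra_simps)
      also have "\<dots> = D^i * (of_nat ((n-i) choose (2*i+1)) * E^(n-3*i))" unfolding oo_term ..
      finally show ?thesis by (metis mult.commute mult.left_commute)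
    qed
  qed
  finally show ?thesis .
qed

lemma ee_term2: "of_nat ((n-i) choose (2*i+2)) * E * E^(n-(3*i+2)) = of_nat ((n-i) choose (2*i+2)) * (E::complex)^(n-Suc(3*i))"
proof (cases "2*i+2 \<le> n-i")
  case True
  then have "n-Suc(3*i) = Suc (n-(3*i+2))" by arith
  then show ?thesis by simp
next
  case False
  then show ?thesis by simp
qed

lemma ee_rec: "qeven D E (Suc (Suc n)) = E * qeven D E (Suc n) + D * qodd D E n"
proof -
  have 1: "qeven D E (Suc (Suc n)) = E^(Suc (Suc n)) + (\<Sum>i\<le>n. of_nat ((Suc n-i) choose (2*i+2)) * D^(Suc i) * E^(n-Suc(3*i)))"
    unfolding qeven_def by (subst sum.atMost_Suc_shift) (simp add: sum.atMost_Suc)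
  have 2: "E * qeven D E (Suc n) = E^(Suc (Suc n)) + (\<Sum>i\<le>n. of_nat ((n-i) choose (2*i+2)) * D^(Suc i) * E^(n-Suc(3*i)))"
  proof -
    have "E * qeven D E (Suc n) = E * (E^(Suc n) + (\<Sum>i\<le>n. of_nat ((n-i) choose (2*i+2)) * D^(Suc i) * E^(n-(3*i+2))))"
      unfolding qeven_def by (subst sum.atMost_Suc_shift) (simp add: numeral_eq_Suc)
    also have "\<dots> = E^(Suc (Suc n)) + (\<Sum>i\<le>n. of_nat ((n-i) choose (2*i+2)) * D^(Suc i) * E^(n-Suc(3*i)))"
      unfolding sum_distrib_left distrib_left
    proof (intro arg_cong2[where f="(+)"] sum.cong refl)
      fix i show "E * (of_nat ((n-i) choose (2*i+2)) * D^(Suc i) * E^(n-(3*i+2))) = of_nat ((n-i) choose (2*i+2)) * D^(Suc i) * E^(n-Suc(3*i))"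
      proof -
        have "E * (of_nat ((n-i) choose (2*i+2)) * D^(Suc i) * E^(n-(3*i+2))) = D^(Suc i) * (of_nat ((n-i) choose (2*i+2)) * E * E^(n-(3*i+2)))"
          by (simp add: algebra_simps)
        also have "\<dots> = D^(Suc i) * (of_nat ((n-i) choose (2*i+2)) * E^(n-Suc(3*i)))" unfolding ee_term2 ..
        finally show ?thesis by (metis mult.commute mult.left_commute)
      qed
    qed simp
    finally show ?thesis .
  qed
  have 3: "D * qodd D E n = (\<Sum>i\<le>n. of_nat ((n-i) choose (2*i+1)) * D^(Suc i) * E^(n-Suc(3*i)))"
    unfolding qodd_def sum_distrib_left by (simp add: algebra_simps)
  have 4: "(\<Sum>i\<le>n. of_nat ((Suc n-i) choose (2*i+2)) * D^(Suc i) * E^(n-Suc(3*i)))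
     = (\<Sum>i\<le>n. of_nat ((n-i) choose (2*i+2)) * D^(Suc i) * E^(n-Suc(3*i)))
     + (\<Sum>i\<le>n. of_nat ((n-i) choose (2*i+1)) * D^(Suc i) * E^(n-Suc(3*i)))"
    unfolding sum.distrib[symmetric]
  proof (rule sum.cong[OF refl])
    fix i assume "i \<in> {..n}"
    then have "Suc n - i = Suc (n-i)" by auto
    then show "of_nat ((Suc n-i) choose (2*i+2)) * D^(Suc i) * E^(n-Suc(3*i)) =
      of_nat ((n-i) choose (2*i+2)) * D^(Suc i) * E^(n-Suc(3*i)) + of_nat ((n-i) choose (2*i+1)) * D^(Suc i) * E^(n-Suc(3*i))"
      by (simp add: algebra_simps numeral_eq_Suc)
  qed
  show ?thesis using 1 2 3 4 by simp
qed

fun hh :: "complex \<Rightarrow> complex \<Rightarrow> nat \<Rightarrow> complex" where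
  "hh E d 0 = 1"
| "hh E d (Suc 0) = 0"
| "hh E d (Suc (Suc 0)) = E"
| "hh E d (Suc (Suc (Suc k))) = E * hh E d (Suc k) - d * hh E d k"

lemma hh_eo: "hh E d (2*n) = qeven (d^2) E n \<and> hh E d (2*n+1) = - d * qodd (d^2) E n
   \<and> hh E d (2*n+2) = qeven (d^2) E (Suc n)"
proof (induction n)
  case 0
  then show ?case by (simp add: qeven_def qodd_def)
next
  case (Suc n)
  have e1: "2*Suc n+1 = Suc(Suc(Suc(2*n)))" by simp
  have e2: "2*Suc n+2 = Suc(Suc(Suc(2*n+1)))" by simp
  have a: "hh E d (2*Suc n+1) = E * hh E d (2*n+1) - d * hh E d (2*n)"
    unfolding e1 by simp
  have b: "hh E d (2*Suc n+2) = E * hh E d (2*n+2) - d * hh E d (2*n+1)"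
    unfolding e2 by simp
  have c1: "hh E d (2*Suc n) = qeven (d^2) E (Suc n)" using Suc by simp
  have c2: "hh E d (2*Suc n+1) = - d * qodd (d^2) E (Suc n)"
    unfolding a oo_rec using Suc by (simp add: algebra_simps)
  have c3: "hh E d (2*Suc n+2) = qeven (d^2) E (Suc (Suc n))"
    unfolding b ee_rec using Suc by (simp add: algebra_simps power2_eq_square)
  show ?case using c1 c2 c3 by blast
qed

lemma root_step:
  assumes "x^3 = E*x - d"
  shows "(x::complex)^(m+3) = E * x^(m+1) - d * x^m"
proof -
  have "x^(m+3) = x^m * x^3" by (simp add: power_add)
  also have "\<dots> = x^m * (E*x - d)" using assms by simp
  also have "\<dots> = E * x^(m+1) - d * x^m" by (simp add: algebra_simps)
  finally show ?thesis .
qed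

lemma powsum:
  fixes a b :: complex
  defines "E \<equiv> a^2 + a*b + b^2" and "d \<equiv> a*b*(a+b)"
  shows "a^(k+3) + b^(k+3) + (-(a+b))^(k+3) = 2*E*hh E d (k+1) - 3*d*hh E d k"
proof (induction k rule: less_induct)
  case (less k)
  have ra: "a^3 = E*a - d" unfolding E_def d_def by algebra
  have rb: "b^3 = E*b - d" unfolding E_def d_def by algebra
  have rc: "(-(a+b))^3 = E*(-(a+b)) - d" unfolding E_def d_def by algebra
  have h: "hh E d 0 = 1" "hh E d 1 = 0" "hh E d 2 = E" "hh E d 3 = -d"
    by (simp_all add: numeral_eq_Suc)
  show ?case
  proof (cases "k < 3")
    case True
    then have "k = 0 \<or> k = 1 \<or> k = 2" by auto
    then show ?thesis
    proof (elim disjE)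
      assume k: "k = 0"
      have "a^3 + b^3 + (-(a+b))^3 = 2*E*0 - 3*d*1" unfolding E_def d_def by algebra
      then show ?thesis using h k by simp
    next
      assume k: "k = 1"
      have "a^4 + b^4 + (-(a+b))^4 = 2*E*E - 3*d*0" unfolding E_def d_def by algebra
      then show ?thesis using h k by simp
    next
      assume k: "k = 2"
      have "a^5 + b^5 + (-(a+b))^5 = 2*E*(-d) - 3*d*E" unfolding E_def d_def by algebra
      then show ?thesis using h k by simp
    qed
  next
    case False
    then obtain j where k: "k = j + 3" by (metis add.commute le_Suc_ex not_less)
    have IH1: "a^(j+4) + b^(j+4) + (-(a+b))^(j+4) = 2*E*hh E d (j+2) - 3*d*hh E d (j+1)"
    proof -
      have lt: "j+1 < k" using k by simp
      have eqs: "j+1+3 = j+4" "j+1+1 = j+2" by simp_all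
      show ?thesis using less[OF lt] unfolding eqs .
    qed
    have IH2: "a^(j+3) + b^(j+3) + (-(a+b))^(j+3) = 2*E*hh E d (j+1) - 3*d*hh E d j"
      using less[of "j"] k by simp
    have eq3: "j+3+3 = k+3" "j+3+1 = j+4" using k by simp_all
    have s1: "a^(k+3) = E * a^(j+4) - d * a^(j+3)" using root_step[OF ra, of "j+3", unfolded eq3] .
    have s2: "b^(k+3) = E * b^(j+4) - d * b^(j+3)" using root_step[OF rb, of "j+3", unfolded eq3] .
    have s3: "(-(a+b))^(k+3) = E * (-(a+b))^(j+4) - d * (-(a+b))^(j+3)" using root_step[OF rc, of "j+3", unfolded eq3] .
    have hk1: "hh E d (k+1) = E * hh E d (j+2) - d * hh E d (j+1)"
      unfolding k by (simp add: numeral_eq_Suc)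
    have hk: "hh E d k = E * hh E d (j+1) - d * hh E d j"
      unfolding k by (simp add: numeral_eq_Suc)
    have "a^(k+3) + b^(k+3) + (-(a+b))^(k+3) = E * (a^(j+4) + b^(j+4) + (-(a+b))^(j+4)) - d * (a^(j+3) + b^(j+3) + (-(a+b))^(j+3))"
      unfolding s1 s2 s3 by (simp add: algebra_simps)
    also have "\<dots> = 2*E*hh E d (k+1) - 3*d*hh E d k"
      unfolding IH1 IH2 hk1 hk by (simp add: algebra_simps)
    finally show ?thesis .
  qed
qed

lemma choose_Suc_times: "(m choose Suc k) * Suc k = (m - k) * (m choose k)"
proof -
  have "Suc m * (m choose k) = ((m choose k) + (m choose Suc k)) * Suc k"
    using Suc_times_binomial_eq[of m k] by simp
  then have "(m choose Suc k) * Suc k = Suc m * (m choose k) - Suc k * (m choose k)"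
    by (simp add: algebra_simps)
  also have "\<dots> = (Suc m - Suc k) * (m choose k)" by (simp add: diff_mult_distrib)
  finally show ?thesis by simp
qed

lemma coeff_id:
  assumes "3*i \<le> n"
  shows "(of_nat (2*n+3) / of_nat (2*i+1)) * of_nat ((n - i) choose (2*i)) =
    2 * of_nat ((n-i) choose (2*i+1)) + 3 * (of_nat ((n-i) choose (2*i)) :: complex)"
proof -
  have nat: "((n-i) choose (2*i+1)) * (2*i+1) = (n - 3*i) * ((n-i) choose (2*i))"
    using choose_Suc_times[of "n-i" "2*i"] by (simp add: diff_diff_add)
  have "(2*n+3) * ((n-i) choose (2*i)) = (2*i+1) * (2 * ((n-i) choose (2*i+1)) + 3 * ((n-i) choose (2*i)))"
  proof -
    have "(2*i+1) * (2 * ((n-i) choose (2*i+1)) + 3 * ((n-i) choose (2*i)))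
        = 2 * (((n-i) choose (2*i+1)) * (2*i+1)) + (6*i+3) * ((n-i) choose (2*i))"
      by (simp add: algebra_simps)
    also have "\<dots> = (2 * (n - 3*i) + (6*i+3)) * ((n-i) choose (2*i))"
      unfolding nat by (simp add: algebra_simps)
    also have "2 * (n - 3*i) + (6*i+3) = 2*n+3" using assms by simp
    finally show ?thesis by simp
  qed
  then have "of_nat ((2*n+3) * ((n-i) choose (2*i))) = (of_nat ((2*i+1) * (2 * ((n-i) choose (2*i+1)) + 3 * ((n-i) choose (2*i)))) :: complex)"
    by (simp only:)
  then have "of_nat (2*n+3) * of_nat ((n-i) choose (2*i)) = of_nat (2*i+1) * (2 * of_nat ((n-i) choose (2*i+1)) + 3 * (of_nat ((n-i) choose (2*i)) :: complex))"
    by (simp add: algebra_simps)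
  moreover have "(of_nat (2*i+1) :: complex) \<noteq> 0" by (simp del: of_nat_Suc)
  ultimately show ?thesis by (simp add: field_simps del: of_nat_Suc of_nat_add of_nat_mult)
qed

lemma alg_main:
  fixes a b :: complex
  assumes "a \<noteq> 0" "b \<noteq> 0" "a + b \<noteq> 0"
  shows "((a+b)^(2*n+3) - a^(2*n+3) - b^(2*n+3)) / (a*b*(a+b)) =
    (\<Sum>i=0..n div 3. (of_nat (2*n+3) / of_nat (2*i+1)) * of_nat ((n - i) choose (2*i))
       * (a*b*(a+b))^(2*i) * (a^2+a*b+b^2)^(n-3*i))"
proof -
  define E where "E = a^2+a*b+b^2"
  define d where "d = a*b*(a+b)"
  have d0: "d \<noteq> 0" using assms unfolding d_def by simp
  have oddp: "(-(a+b))^(2*n+3) = -((a+b)^(2*n+3))"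
    by (rule power_minus_odd) simp
  have ps: "a^(2*n+3) + b^(2*n+3) + (-(a+b))^(2*n+3) = 2*E*hh E d (2*n+1) - 3*d*hh E d (2*n)"
    using powsum[where a=a and b=b and k="2*n"] unfolding E_def d_def by simp
  have num: "(a+b)^(2*n+3) - a^(2*n+3) - b^(2*n+3) = d * (2*E*qodd (d^2) E n + 3 * qeven (d^2) E n)"
    using ps oddp hh_eo[of E d n] by (simp add: algebra_simps)
  have lhs: "((a+b)^(2*n+3) - a^(2*n+3) - b^(2*n+3)) / (a*b*(a+b)) = 2*E*qodd (d^2) E n + 3 * qeven (d^2) E n"
    unfolding num d_def[symmetric] using d0 by simp
  have qeven': "qeven (d^2) E n = (\<Sum>i\<le>n div 3. of_nat ((n-i) choose (2*i)) * (d^2)^i * E^(n-3*i))"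
    unfolding qeven_def
    by (rule sum.mono_neutral_right) auto
  have qodd': "E * qodd (d^2) E n = (\<Sum>i\<le>n div 3. of_nat ((n-i) choose (2*i+1)) * (d^2)^i * E^(n-3*i))"
  proof -
    have X: "qodd (d^2) E n = (\<Sum>i\<le>n div 3. of_nat ((n-i) choose (2*i+1)) * (d^2)^i * E^(n-Suc(3*i)))"
      unfolding qodd_def
      by (rule sum.mono_neutral_right) auto
    show ?thesis unfolding X sum_distrib_left
    proof (intro sum.cong refl)
      fix i
      have "E * (of_nat ((n-i) choose (2*i+1)) * (d^2)^i * E^(n-Suc(3*i))) = (d^2)^i * (of_nat ((n-i) choose (2*i+1)) * E * E^(n-Suc(3*i)))"
        by (simp add: algebra_simps)
      also have "\<dots> = (d^2)^i * (of_nat ((n-i) choose (2*i+1)) * E^(n-3*i))" unfolding oo_term ..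
      finally show "E * (of_nat ((n-i) choose (2*i+1)) * (d^2)^i * E^(n-Suc(3*i))) = of_nat ((n-i) choose (2*i+1)) * (d^2)^i * E^(n-3*i)"
        by (metis mult.commute mult.left_commute)
    qed
  qed
  have rhs: "(\<Sum>i=0..n div 3. (of_nat (2*n+3) / of_nat (2*i+1)) * of_nat ((n - i) choose (2*i))
       * d^(2*i) * E^(n-3*i)) = 2*(E*qodd (d^2) E n) + 3 * qeven (d^2) E n"
    unfolding qodd' qeven' sum_distrib_left sum.distrib[symmetric] atLeast0AtMost
  proof (intro sum.cong refl)
    fix i assume "i \<in> {..n div 3}"
    then have "3*i \<le> n" by auto
    then show "(of_nat (2*n+3) / of_nat (2*i+1)) * of_nat ((n - i) choose (2*i)) * d^(2*i) * E^(n-3*i) =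
      2 * (of_nat ((n-i) choose (2*i+1)) * (d^2)^i * E^(n-3*i)) + 3 * (of_nat ((n-i) choose (2*i)) * (d^2)^i * E^(n-3*i))"
      unfolding power_mult coeff_id[OF \<open>3*i \<le> n\<close>] by (simp add: algebra_simps)
  qed
  show ?thesis unfolding lhs using rhs unfolding E_def d_def by (simp add: algebra_simps)
qed



lemma geo_pos:
  fixes r :: real assumes "0 \<le> r" "r < 1"
  shows "((\<lambda>m::int. r ^ nat \<bar>m\<bar>) has_sum (r/(1-r))) {1..}"
proof -
  have g: "((\<lambda>n::nat. r ^ n) has_sum (r/(1-r))) {1..}"
    using has_sum_geometric_from_1[of r] assms by simp
  show ?thesis
    using g
    by (subst has_sum_reindex_bij_witness[where i=nat and j=int and T="{1::int..}" and h="\<lambda>m::int. r ^ nat \<bar>m\<bar>", symmetric]) auto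
qed

lemma geo_neg:
  fixes r :: real assumes "0 \<le> r" "r < 1"
  shows "((\<lambda>m::int. r ^ nat \<bar>m\<bar>) has_sum (r/(1-r))) {..-1}"
proof -
  have g: "((\<lambda>m::int. r ^ nat \<bar>m\<bar>) has_sum (r/(1-r))) {1..}" by (rule geo_pos[OF assms])
  show ?thesis
    using g
  proof -
    have "((\<lambda>m::int. r ^ nat \<bar>m\<bar>) has_sum (r/(1-r))) {..-1} = ((\<lambda>m::int. r ^ nat \<bar>m\<bar>) has_sum (r/(1-r))) {1..}"
      by (rule has_sum_reindex_bij_witness[where i=uminus and j=uminus]) auto
    with g show ?thesis by simp
  qed
qed

lemma geo_int:
  fixes r :: real assumes "0 \<le> r" "r < 1"
  shows "((\<lambda>m::int. r ^ nat \<bar>m\<bar>) has_sum (2*r/(1-r))) (-{0})"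
proof -
  have "((\<lambda>m::int. r ^ nat \<bar>m\<bar>) has_sum (r/(1-r) + r/(1-r))) ({1..} \<union> {..-1})"
    by (rule has_sum_Un_disjoint[OF geo_pos[OF assms] geo_neg[OF assms]]) auto
  moreover have "{1..} \<union> {..-1} = (-{0::int})" by auto
  ultimately show ?thesis by simp
qed

lemma geo_int_summable:
  fixes r :: real assumes "0 \<le> r" "r < 1"
  shows "(\<lambda>m::int. r ^ nat \<bar>m\<bar>) summable_on UNIV"
proof -
  have "(\<lambda>m::int. r ^ nat \<bar>m\<bar>) summable_on (-{0} \<union> {0})"
  proof (rule summable_on_Un_disjoint)
    show "(\<lambda>m::int. r ^ nat \<bar>m\<bar>) summable_on (-{0})" using geo_int[OF assms] by (auto simp: summable_on_def)
  qed auto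
  moreover have "(-{0} \<union> {0}) = (UNIV::int set)" by auto
  ultimately show ?thesis by metis
qed

definition tq :: "complex \<Rightarrow> complex \<Rightarrow> complex" where
  "tq z x = exp (of_real pi * \<i> * z * x)"

lemma norm_tq: "norm (tq z (of_real x)) = exp (- pi * Im z * x)"
  by (simp add: tq_def)

lemma tq_mult: "tq z x * tq z y = tq z (x+y)"
  by (simp add: tq_def exp_add[symmetric] algebra_simps)

lemma tq_double: "tq (2*z) x = tq z (2*x)"
  by (simp add: tq_def mult_ac)

lemma tq2:
  assumes "x + y = 2*u + 2*w"
  shows "tq z x * tq z y = tq (2*z) u * tq (2*z) w"
  using assms by (simp add: tq_mult tq_double distrib_left)

definition sg :: "int \<Rightarrow> complex" where "sg m = (-1) ^ nat (m^2)"

lemma sg_eq: "sg m = (if even m then 1 else -1)"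
  unfolding sg_def minus_one_power_iff by (simp add: even_nat_iff)

lemma theta3_tq: "theta3 z = (\<Sum>\<^sub>\<infinity>m. tq z ((of_int m)^2))"
  by (simp add: theta3_def tq_def)
lemma theta2_tq: "theta2 z = (\<Sum>\<^sub>\<infinity>m. tq z ((of_int m + 1/2)^2))"
  by (simp add: theta2_def tq_def)
lemma theta4_tq: "theta4 z = (\<Sum>\<^sub>\<infinity>m. sg m * tq z ((of_int m)^2))"
  by (simp add: theta4_def tq_def sg_def)

lemma norm_tq_bound:
  assumes "Im z > 0" "x \<ge> real k - c"
  shows "norm (tq z (of_real x)) \<le> exp (pi * Im z * c) * exp (- pi * Im z) ^ k"
proof -
  have e: "exp (- pi * Im z) ^ k = exp (real k * (- pi * Im z))" by (metis exp_of_nat_mult)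
  have "exp (pi * Im z * c) * exp (- pi * Im z) ^ k = exp (pi * Im z * c + real k * (- pi * Im z))"
    unfolding e exp_add by (rule refl)
  moreover have "- pi * Im z * x \<le> pi * Im z * c + real k * (- pi * Im z)"
  proof -
    have "pi * Im z * (real k - c) \<le> pi * Im z * x"
      using assms by (intro mult_left_mono) auto
    then show ?thesis by (simp add: algebra_simps)
  qed
  ultimately show ?thesis unfolding norm_tq by simp
qed

lemma int_abs_le_sq: "real (nat \<bar>m\<bar>) \<le> (real_of_int m)^2"
proof -
  have "\<bar>m\<bar> \<le> m^2"
  proof (cases "m = 0")
    case False
    then have "\<bar>m\<bar> * 1 \<le> \<bar>m\<bar> * \<bar>m\<bar>" by (intro mult_left_mono) auto
    then show ?thesis by (simp add: power2_eq_square abs_mult_self_eq)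
  qed simp
  then have "real_of_int \<bar>m\<bar> \<le> real_of_int (m^2)" by linarith
  then show ?thesis by simp
qed

lemma int_abs_le_sq2: "real (nat \<bar>m\<bar>) - 1 \<le> (real_of_int m + 1/2)^2"
proof -
  have f1: "real (nat \<bar>m\<bar>) \<le> (real_of_int m)^2" by (rule int_abs_le_sq)
  have f2: "(real_of_int m + 1/2)^2 = (real_of_int m)^2 + real_of_int m + 1/4"
    by (simp add: power2_eq_square algebra_simps)
  have f3: "(real_of_int m + 1)^2 = (real_of_int m)^2 + 2 * real_of_int m + 1"
    by (simp add: power2_eq_square algebra_simps)
  have f4: "0 \<le> (real_of_int m + 1)^2" by simp
  show ?thesis
  proof (cases "m \<ge> 0")
    case True
    then have "real (nat \<bar>m\<bar>) = real_of_int m" by simp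
    with f1 f2 f3 f4 show ?thesis by linarith
  next
    case False
    then have "real (nat \<bar>m\<bar>) = - real_of_int m" by simp
    with f1 f2 f3 f4 show ?thesis by linarith
  qed
qed

lemma summable_f3:
  assumes "Im z > 0"
  shows "(\<lambda>m::int. tq z ((of_int m)^2)) summable_on UNIV"
proof -
  have r: "0 \<le> exp (- pi * Im z)" "exp (- pi * Im z) < 1" using assms by auto
  have "(\<lambda>m::int. norm (tq z ((of_int m)^2))) summable_on UNIV"
  proof (rule Infinite_Sum.abs_summable_on_comparison_test')
    show "(\<lambda>m::int. exp (pi * Im z * 0) * exp (- pi * Im z) ^ nat \<bar>m\<bar>) summable_on UNIV"
      by (rule summable_on_cmult_right, rule geo_int_summable[OF r])
    fix m :: int
    have "(of_int m)^2 = (of_real ((real_of_int m)^2) :: complex)" by simp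
    then show "norm (tq z ((of_int m)^2)) \<le> exp (pi * Im z * 0) * exp (- pi * Im z) ^ nat \<bar>m\<bar>"
      using norm_tq_bound[OF assms, of "nat \<bar>m\<bar>" 0 "(real_of_int m)^2"] int_abs_le_sq[of m] by simp
  qed
  then show ?thesis using summable_on_iff_abs_summable_on_complex by blast
qed

lemma summable_f2:
  assumes "Im z > 0"
  shows "(\<lambda>m::int. tq z ((of_int m + 1/2)^2)) summable_on UNIV"
proof -
  have r: "0 \<le> exp (- pi * Im z)" "exp (- pi * Im z) < 1" using assms by auto
  have "(\<lambda>m::int. norm (tq z ((of_int m + 1/2)^2))) summable_on UNIV"
  proof (rule Infinite_Sum.abs_summable_on_comparison_test')
    show "(\<lambda>m::int. exp (pi * Im z * 1) * exp (- pi * Im z) ^ nat \<bar>m\<bar>) summable_on UNIV"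
      by (rule summable_on_cmult_right, rule geo_int_summable[OF r])
    fix m :: int
    have "(of_int m + 1/2)^2 = (of_real ((real_of_int m + 1/2)^2) :: complex)" by simp
    then show "norm (tq z ((of_int m + 1/2)^2)) \<le> exp (pi * Im z * 1) * exp (- pi * Im z) ^ nat \<bar>m\<bar>"
      using norm_tq_bound[OF assms, of "nat \<bar>m\<bar>" 1 "(real_of_int m + 1/2)^2"] int_abs_le_sq2[of m] by simp
  qed
  then show ?thesis using summable_on_iff_abs_summable_on_complex by blast
qed

lemma summable_f4:
  assumes "Im z > 0"
  shows "(\<lambda>m::int. sg m * tq z ((of_int m)^2)) summable_on UNIV"
proof -
  have "(\<lambda>m::int. norm (sg m * tq z ((of_int m)^2))) summable_on UNIV"
  proof (rule Infinite_Sum.abs_summable_on_comparison_test')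
    show "(\<lambda>m::int. norm (tq z ((of_int m)^2))) summable_on UNIV"
      using summable_on_iff_abs_summable_on_complex[THEN iffD1, OF summable_f3[OF assms]] .
  qed (simp add: sg_eq norm_mult)
  then show ?thesis using summable_on_iff_abs_summable_on_complex by blast
qed

lemma prod_summable:
  fixes f g :: "int \<Rightarrow> complex"
  assumes "f summable_on UNIV" "g summable_on UNIV"
  shows "(\<lambda>(a,b). f a * g b) summable_on UNIV"
proof -
  have nf: "(\<lambda>x. norm (f x)) summable_on UNIV"
    using summable_on_iff_abs_summable_on_complex[THEN iffD1, OF assms(1)] .
  have ng: "(\<lambda>x. norm (g x)) summable_on UNIV"
    using summable_on_iff_abs_summable_on_complex[THEN iffD1, OF assms(2)] .
  define G where "G = infsum (\<lambda>y. norm (g y)) UNIV"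
  have G0: "G \<ge> 0" unfolding G_def by (rule infsum_nonneg) auto
  have "(\<lambda>p. norm ((\<lambda>(a,b). f a * g b) p)) summable_on Sigma UNIV (\<lambda>_. UNIV)"
  proof (rule Infinite_Sum.abs_summable_on_Sigma_iff[THEN iffD2], intro conjI ballI)
    fix x :: int
    have e: "(\<lambda>y. norm ((\<lambda>(a, b). f a * g b) (x, y))) = (\<lambda>y. norm (f x) * norm (g y))"
      by (simp add: norm_mult)
    show "(\<lambda>y. norm ((\<lambda>(a, b). f a * g b) (x, y))) summable_on UNIV"
      unfolding e by (rule summable_on_cmult_right[OF ng])
  next
    have e: "(\<lambda>x. norm (infsum (\<lambda>y. norm ((\<lambda>(a, b). f a * g b) (x, y))) UNIV)) = (\<lambda>x. norm (f x) * G)"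
    proof
      fix x
      have "infsum (\<lambda>y. norm ((\<lambda>(a, b). f a * g b) (x, y))) UNIV = infsum (\<lambda>y. norm (f x) * norm (g y)) UNIV"
        by (simp add: norm_mult)
      also have "\<dots> = norm (f x) * G" unfolding G_def by (rule infsum_cmult_right')
      finally show "norm (infsum (\<lambda>y. norm ((\<lambda>(a, b). f a * g b) (x, y))) UNIV) = norm (f x) * G"
        using G0 by simp
    qed
    show "(\<lambda>x. norm (infsum (\<lambda>y. norm ((\<lambda>(a, b). f a * g b) (x, y))) UNIV)) summable_on UNIV"
      unfolding e by (rule summable_on_cmult_left[OF nf])
  qed
  then have "(\<lambda>p. norm ((\<lambda>(a,b). f a * g b) p)) summable_on UNIV" by simp
  then show ?thesis using summable_on_iff_abs_summable_on_complex[THEN iffD2] by blast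
qed

lemma prod_infsum:
  fixes f g :: "int \<Rightarrow> complex"
  assumes "f summable_on UNIV" "g summable_on UNIV"
  shows "infsum f UNIV * infsum g UNIV = (\<Sum>\<^sub>\<infinity>(a,b). f a * g b)"
proof -
  have s: "(\<lambda>(a,b). f a * g b) summable_on Sigma UNIV (\<lambda>_. UNIV)"
    using prod_summable[OF assms] by simp
  have "(\<Sum>\<^sub>\<infinity>(a,b). f a * g b) = infsum (\<lambda>a. infsum (\<lambda>b. f a * g b) UNIV) UNIV"
    using infsum_Sigma'_banach[OF s] by simp
  also have "\<dots> = infsum (\<lambda>a. f a * infsum g UNIV) UNIV" by (simp only: infsum_cmult_right')
  also have "\<dots> = infsum f UNIV * infsum g UNIV" by (rule infsum_cmult_left')
  finally show ?thesis by simp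
qed

lemma split2:
  fixes g :: "int \<times> int \<Rightarrow> complex"
  assumes "g summable_on UNIV"
  shows "infsum g UNIV = (\<Sum>\<^sub>\<infinity>(a,b). g (a+b, a-b)) + (\<Sum>\<^sub>\<infinity>(a,b). g (a+b+1, a-b))"
proof -
  define Ev where "Ev = {p::int\<times>int. even (fst p + snd p)}"
  define Od where "Od = {p::int\<times>int. odd (fst p + snd p)}"
  have U: "UNIV = Ev \<union> Od" unfolding Ev_def Od_def by auto
  have D: "Ev \<inter> Od = {}" unfolding Ev_def Od_def by auto
  have "infsum g UNIV = infsum g Ev + infsum g Od"
    unfolding U by (rule infsum_Un_disjoint[OF summable_on_subset_banach[OF assms] summable_on_subset_banach[OF assms] D]) auto
  moreover have "(\<Sum>\<^sub>\<infinity>(a,b). g (a+b, a-b)) = infsum g Ev"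
    by (rule infsum_reindex_bij_witness[where j="\<lambda>(a,b). (a+b, a-b)" and i="\<lambda>(m,n). ((m+n) div 2, (m-n) div 2)"])
       (auto simp: Ev_def, presburger+)
  moreover have "(\<Sum>\<^sub>\<infinity>(a,b). g (a+b+1, a-b)) = infsum g Od"
    by (rule infsum_reindex_bij_witness[where j="\<lambda>(a,b). (a+b+1, a-b)" and i="\<lambda>(m,n). ((m+n-1) div 2, (m-n-1) div 2)"])
       (auto simp: Od_def, presburger+)
  ultimately show ?thesis by simp
qed

lemma sq_infsum:
  fixes f :: "int \<Rightarrow> complex"
  assumes "f summable_on UNIV"
  shows "infsum f UNIV ^ 2 = (\<Sum>\<^sub>\<infinity>(a,b). f a * f b)"
  using prod_infsum[OF assms assms] by (simp add: power2_eq_square)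

lemma infsum_cong2:
  assumes "\<And>a b. P a b = Q a b"
  shows "(\<Sum>\<^sub>\<infinity>(a::int,b::int). P a b) = (\<Sum>\<^sub>\<infinity>(a,b). (Q a b :: complex))"
  using assms by (intro infsum_cong) auto

lemma id_33: "(of_int (a+b) :: complex)^2 + (of_int (a-b))^2 = 2*(of_int a)^2 + 2*(of_int b)^2"
  by (simp add: power2_eq_square algebra_simps)
lemma id_32: "(of_int (a+b+1) :: complex)^2 + (of_int (a-b))^2 = 2*(of_int a + 1/2)^2 + 2*(of_int b + 1/2)^2"
  by (simp add: power2_eq_square algebra_simps)
lemma id_22: "(of_int (a+b) + 1/2 :: complex)^2 + (of_int (a-b) + 1/2)^2 = 2*(of_int a + 1/2)^2 + 2*(of_int b)^2"
  by (simp add: power2_eq_square algebra_simps)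
lemma id_23: "(of_int (a+b+1) + 1/2 :: complex)^2 + (of_int (a-b) + 1/2)^2 = 2*(of_int (a+1))^2 + 2*(of_int b + 1/2)^2"
  by (simp add: power2_eq_square algebra_simps)

lemma theta3_sq:
  assumes "Im z > 0"
  shows "theta3 z ^ 2 = theta3 (2*z) ^ 2 + theta2 (2*z) ^ 2"
proof -
  have z2: "Im (2*z) > 0" using assms by simp
  have "theta3 z ^ 2 = (\<Sum>\<^sub>\<infinity>(a,b). tq z ((of_int a)^2) * tq z ((of_int b)^2))"
    unfolding theta3_tq by (rule sq_infsum[OF summable_f3[OF assms]])
  also have "\<dots> = (\<Sum>\<^sub>\<infinity>(a,b). tq z ((of_int (a+b))^2) * tq z ((of_int (a-b))^2))
      + (\<Sum>\<^sub>\<infinity>(a,b). tq z ((of_int (a+b+1))^2) * tq z ((of_int (a-b))^2))"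
    using split2[OF prod_summable[OF summable_f3[OF assms] summable_f3[OF assms]]] by simp
  also have "(\<Sum>\<^sub>\<infinity>(a,b). tq z ((of_int (a+b))^2) * tq z ((of_int (a-b))^2))
      = (\<Sum>\<^sub>\<infinity>(a,b). tq (2*z) ((of_int a)^2) * tq (2*z) ((of_int b)^2))"
    by (rule infsum_cong2, rule tq2, rule id_33)
  also have "\<dots> = theta3 (2*z) ^ 2"
    unfolding theta3_tq by (rule sq_infsum[OF summable_f3[OF z2], symmetric])
  also have "(\<Sum>\<^sub>\<infinity>(a,b). tq z ((of_int (a+b+1))^2) * tq z ((of_int (a-b))^2))
      = (\<Sum>\<^sub>\<infinity>(a,b). tq (2*z) ((of_int a + 1/2)^2) * tq (2*z) ((of_int b + 1/2)^2))"
    by (rule infsum_cong2, rule tq2, rule id_32)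
  also have "\<dots> = theta2 (2*z) ^ 2"
    unfolding theta2_tq by (rule sq_infsum[OF summable_f2[OF z2], symmetric])
  finally show ?thesis .
qed

lemma sg_pair1: "sg (a+b) * sg (a-b) = 1"
  by (simp add: sg_eq)
lemma sg_pair2: "sg (a+b+1) * sg (a-b) = -1"
  by (simp add: sg_eq) presburger?
lemma sg_diff: "sg (a-b) = sg a * sg b"
  by (simp add: sg_eq)
lemma sg_refl: "sg (-1-a) = - sg a"
  by (simp add: sg_eq)

lemma theta4_sq:
  assumes "Im z > 0"
  shows "theta4 z ^ 2 = theta3 (2*z) ^ 2 - theta2 (2*z) ^ 2"
proof -
  have z2: "Im (2*z) > 0" using assms by simp
  have "theta4 z ^ 2 = (\<Sum>\<^sub>\<infinity>(a,b). (sg a * tq z ((of_int a)^2)) * (sg b * tq z ((of_int b)^2)))"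
    unfolding theta4_tq by (rule sq_infsum[OF summable_f4[OF assms]])
  also have "\<dots> = (\<Sum>\<^sub>\<infinity>(a,b). (sg (a+b) * tq z ((of_int (a+b))^2)) * (sg (a-b) * tq z ((of_int (a-b))^2)))
      + (\<Sum>\<^sub>\<infinity>(a,b). (sg (a+b+1) * tq z ((of_int (a+b+1))^2)) * (sg (a-b) * tq z ((of_int (a-b))^2)))"
    using split2[OF prod_summable[OF summable_f4[OF assms] summable_f4[OF assms]]] by simp
  also have "(\<Sum>\<^sub>\<infinity>(a,b). (sg (a+b) * tq z ((of_int (a+b))^2)) * (sg (a-b) * tq z ((of_int (a-b))^2)))
      = (\<Sum>\<^sub>\<infinity>(a,b). tq (2*z) ((of_int a)^2) * tq (2*z) ((of_int b)^2))"
  proof (rule infsum_cong2)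
    fix a b :: int
    have "(sg (a+b) * tq z ((of_int (a+b))^2)) * (sg (a-b) * tq z ((of_int (a-b))^2))
       = (sg (a+b) * sg (a-b)) * (tq z ((of_int (a+b))^2) * tq z ((of_int (a-b))^2))" by (simp add: mult_ac)
    also have "\<dots> = tq (2*z) ((of_int a)^2) * tq (2*z) ((of_int b)^2)"
      unfolding sg_pair1 mult_1_left by (rule tq2, rule id_33)
    finally show "(sg (a+b) * tq z ((of_int (a+b))^2)) * (sg (a-b) * tq z ((of_int (a-b))^2)) = tq (2*z) ((of_int a)^2) * tq (2*z) ((of_int b)^2)" .
  qed
  also have "\<dots> = theta3 (2*z) ^ 2"
    unfolding theta3_tq by (rule sq_infsum[OF summable_f3[OF z2], symmetric])
  also have "(\<Sum>\<^sub>\<infinity>(a,b). (sg (a+b+1) * tq z ((of_int (a+b+1))^2)) * (sg (a-b) * tq z ((of_int (a-b))^2)))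
      = (\<Sum>\<^sub>\<infinity>(a,b). - (tq (2*z) ((of_int a + 1/2)^2) * tq (2*z) ((of_int b + 1/2)^2)))"
  proof (rule infsum_cong2)
    fix a b :: int
    have "(sg (a+b+1) * tq z ((of_int (a+b+1))^2)) * (sg (a-b) * tq z ((of_int (a-b))^2))
       = (sg (a+b+1) * sg (a-b)) * (tq z ((of_int (a+b+1))^2) * tq z ((of_int (a-b))^2))" by (simp add: mult_ac)
    also have "\<dots> = - (tq (2*z) ((of_int a + 1/2)^2) * tq (2*z) ((of_int b + 1/2)^2))"
      unfolding sg_pair2 mult_minus1 by (simp only: tq2[OF id_32])
    finally show "(sg (a+b+1) * tq z ((of_int (a+b+1))^2)) * (sg (a-b) * tq z ((of_int (a-b))^2)) = - (tq (2*z) ((of_int a + 1/2)^2) * tq (2*z) ((of_int b + 1/2)^2))" .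
  qed
  also have "\<dots> = - (\<Sum>\<^sub>\<infinity>(a,b). tq (2*z) ((of_int a + 1/2)^2) * tq (2*z) ((of_int b + 1/2)^2))"
    by (simp add: infsum_uminus case_prod_unfold)
  also have "(\<Sum>\<^sub>\<infinity>(a,b). tq (2*z) ((of_int a + 1/2)^2) * tq (2*z) ((of_int b + 1/2)^2)) = theta2 (2*z) ^ 2"
    unfolding theta2_tq by (rule sq_infsum[OF summable_f2[OF z2], symmetric])
  finally show ?thesis by simp
qed

lemma theta2_sq:
  assumes "Im z > 0"
  shows "theta2 z ^ 2 = 2 * theta2 (2*z) * theta3 (2*z)"
proof -
  have z2: "Im (2*z) > 0" using assms by simp
  have sh: "(\<lambda>a. tq (2*z) ((of_int (a+1))^2)) summable_on UNIV"
    using summable_f3[OF z2]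
    by (subst summable_on_reindex_bij_witness[where i="\<lambda>a. a - 1" and j="\<lambda>a. a + 1" and T=UNIV]) auto
  have shv: "infsum (\<lambda>a. tq (2*z) ((of_int (a+1))^2)) UNIV = theta3 (2*z)"
    unfolding theta3_tq
    by (rule infsum_reindex_bij_witness[where i="\<lambda>a. a - 1" and j="\<lambda>a. a + 1"]) auto
  have "theta2 z ^ 2 = (\<Sum>\<^sub>\<infinity>(a,b). tq z ((of_int a + 1/2)^2) * tq z ((of_int b + 1/2)^2))"
    unfolding theta2_tq by (rule sq_infsum[OF summable_f2[OF assms]])
  also have "\<dots> = (\<Sum>\<^sub>\<infinity>(a,b). tq z ((of_int (a+b) + 1/2)^2) * tq z ((of_int (a-b) + 1/2)^2))
      + (\<Sum>\<^sub>\<infinity>(a,b). tq z ((of_int (a+b+1) + 1/2)^2) * tq z ((of_int (a-b) + 1/2)^2))"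
    using split2[OF prod_summable[OF summable_f2[OF assms] summable_f2[OF assms]]] by simp
  also have "(\<Sum>\<^sub>\<infinity>(a,b). tq z ((of_int (a+b) + 1/2)^2) * tq z ((of_int (a-b) + 1/2)^2))
      = (\<Sum>\<^sub>\<infinity>(a,b). tq (2*z) ((of_int a + 1/2)^2) * tq (2*z) ((of_int b)^2))"
    by (rule infsum_cong2, rule tq2, rule id_22)
  also have "\<dots> = theta2 (2*z) * theta3 (2*z)"
    unfolding theta2_tq theta3_tq by (rule prod_infsum[OF summable_f2[OF z2] summable_f3[OF z2], symmetric])
  also have "(\<Sum>\<^sub>\<infinity>(a,b). tq z ((of_int (a+b+1) + 1/2)^2) * tq z ((of_int (a-b) + 1/2)^2))
      = (\<Sum>\<^sub>\<infinity>(a,b). tq (2*z) ((of_int (a+1))^2) * tq (2*z) ((of_int b + 1/2)^2))"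
    by (rule infsum_cong2, rule tq2, rule id_23)
  also have "\<dots> = theta3 (2*z) * theta2 (2*z)"
    unfolding theta2_tq shv[symmetric] by (rule prod_infsum[OF sh summable_f2[OF z2], symmetric])
  finally show ?thesis by simp
qed

lemma alt_zero:
  assumes "Im w > 0"
  shows "(\<Sum>\<^sub>\<infinity>a. sg a * tq w ((of_int a + 1/2)^2)) = 0"
proof -
  define X where "X = (\<Sum>\<^sub>\<infinity>a. sg a * tq w ((of_int a + 1/2)^2))"
  have "X = (\<Sum>\<^sub>\<infinity>a. sg (-1-a) * tq w ((of_int (-1-a) + 1/2)^2))"
    unfolding X_def
    by (rule infsum_reindex_bij_witness[where i="\<lambda>a. -1-a" and j="\<lambda>a. -1-a", symmetric]) auto
  also have "\<dots> = (\<Sum>\<^sub>\<infinity>a. - (sg a * tq w ((of_int a + 1/2)^2)))"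
  proof (rule infsum_cong)
    fix a :: int
    have "(of_int (-1-a) + 1/2 :: complex)^2 = (of_int a + 1/2)^2" by (simp add: power2_eq_square algebra_simps)
    then show "sg (-1-a) * tq w ((of_int (-1-a) + 1/2)^2) = - (sg a * tq w ((of_int a + 1/2)^2))"
      by (simp add: sg_refl)
  qed
  also have "\<dots> = - X" unfolding X_def by (simp add: infsum_uminus)
  finally have "X = - X" .
  then show ?thesis unfolding X_def by simp
qed

lemma theta34:
  assumes "Im z > 0"
  shows "theta3 z * theta4 z = theta4 (2*z) ^ 2"
proof -
  have z2: "Im (2*z) > 0" using assms by simp
  have s2: "(\<lambda>a. sg a * tq (2*z) ((of_int a + 1/2)^2)) summable_on UNIV"
  proof -
    have "(\<lambda>a. norm (sg a * tq (2*z) ((of_int a + 1/2)^2))) summable_on UNIV"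
    proof (rule Infinite_Sum.abs_summable_on_comparison_test')
      show "(\<lambda>m::int. norm (tq (2*z) ((of_int m + 1/2)^2))) summable_on UNIV"
        using summable_on_iff_abs_summable_on_complex[THEN iffD1, OF summable_f2[OF z2]] .
    qed (simp add: sg_eq norm_mult)
    then show ?thesis using summable_on_iff_abs_summable_on_complex by blast
  qed
  have "theta3 z * theta4 z = (\<Sum>\<^sub>\<infinity>(a,b). tq z ((of_int a)^2) * (sg b * tq z ((of_int b)^2)))"
    unfolding theta3_tq theta4_tq by (rule prod_infsum[OF summable_f3[OF assms] summable_f4[OF assms]])
  also have "\<dots> = (\<Sum>\<^sub>\<infinity>(a,b). tq z ((of_int (a+b))^2) * (sg (a-b) * tq z ((of_int (a-b))^2)))
      + (\<Sum>\<^sub>\<infinity>(a,b). tq z ((of_int (a+b+1))^2) * (sg (a-b) * tq z ((of_int (a-b))^2)))"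
    using split2[OF prod_summable[OF summable_f3[OF assms] summable_f4[OF assms]]] by simp
  also have "(\<Sum>\<^sub>\<infinity>(a,b). tq z ((of_int (a+b))^2) * (sg (a-b) * tq z ((of_int (a-b))^2)))
      = (\<Sum>\<^sub>\<infinity>(a,b). (sg a * tq (2*z) ((of_int a)^2)) * (sg b * tq (2*z) ((of_int b)^2)))"
  proof (rule infsum_cong2)
    fix a b :: int
    have "tq z ((of_int (a+b))^2) * (sg (a-b) * tq z ((of_int (a-b))^2))
       = (sg a * sg b) * (tq z ((of_int (a+b))^2) * tq z ((of_int (a-b))^2))" by (simp add: sg_diff mult_ac)
    also have "\<dots> = (sg a * sg b) * (tq (2*z) ((of_int a)^2) * tq (2*z) ((of_int b)^2))"
      by (simp only: tq2[OF id_33])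
    finally show "tq z ((of_int (a+b))^2) * (sg (a-b) * tq z ((of_int (a-b))^2)) = (sg a * tq (2*z) ((of_int a)^2)) * (sg b * tq (2*z) ((of_int b)^2))"
      by (simp add: mult_ac)
  qed
  also have "\<dots> = theta4 (2*z) ^ 2"
    unfolding theta4_tq by (rule sq_infsum[OF summable_f4[OF z2], symmetric])
  also have "(\<Sum>\<^sub>\<infinity>(a,b). tq z ((of_int (a+b+1))^2) * (sg (a-b) * tq z ((of_int (a-b))^2)))
      = (\<Sum>\<^sub>\<infinity>(a,b). (sg a * tq (2*z) ((of_int a + 1/2)^2)) * (sg b * tq (2*z) ((of_int b + 1/2)^2)))"
  proof (rule infsum_cong2)
    fix a b :: int
    have "tq z ((of_int (a+b+1))^2) * (sg (a-b) * tq z ((of_int (a-b))^2))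
       = (sg a * sg b) * (tq z ((of_int (a+b+1))^2) * tq z ((of_int (a-b))^2))" by (simp add: sg_diff mult_ac)
    also have "\<dots> = (sg a * sg b) * (tq (2*z) ((of_int a + 1/2)^2) * tq (2*z) ((of_int b + 1/2)^2))"
      by (simp only: tq2[OF id_32])
    finally show "tq z ((of_int (a+b+1))^2) * (sg (a-b) * tq z ((of_int (a-b))^2)) = (sg a * tq (2*z) ((of_int a + 1/2)^2)) * (sg b * tq (2*z) ((of_int b + 1/2)^2))"
      by (simp add: mult_ac)
  qed
  also have "\<dots> = (\<Sum>\<^sub>\<infinity>a. sg a * tq (2*z) ((of_int a + 1/2)^2)) ^ 2"
    by (rule sq_infsum[OF s2, symmetric])
  also have "\<dots> = 0" using alt_zero[OF z2] by simp
  finally show ?thesis by simp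
qed

lemma jacobi:
  assumes "Im z > 0"
  shows "theta3 z ^ 4 = theta2 z ^ 4 + theta4 z ^ 4"
proof -
  have "theta3 z ^ 4 - theta4 z ^ 4 = (theta3 z ^ 2 - theta4 z ^ 2) * (theta3 z ^ 2 + theta4 z ^ 2)"
    by (simp add: algebra_simps power2_eq_square power4_eq_xxxx)
  also have "\<dots> = (2 * theta2 (2*z) ^ 2) * (2 * theta3 (2*z) ^ 2)"
    using theta3_sq[OF assms] theta4_sq[OF assms] by simp
  also have "\<dots> = (theta2 z ^ 2) ^ 2"
    using theta2_sq[OF assms] by (simp add: algebra_simps power2_eq_square)
  finally show ?thesis by (simp add: algebra_simps power2_eq_square power4_eq_xxxx)
qed

lemma tail_bound:
  fixes f :: "int \<Rightarrow> complex" and r :: real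
  assumes "f summable_on UNIV" "finite F" "0 \<in> F" "0 \<le> r" "r < 1"
    and bnd: "\<And>m. m \<notin> F \<Longrightarrow> norm (f m) \<le> r ^ nat \<bar>m\<bar>"
  shows "norm (infsum f UNIV - sum f F) \<le> 2*r/(1-r)"
proof -
  have sF: "f summable_on (-F)" by (rule summable_on_subset_banach[OF assms(1)]) auto
  have "infsum f UNIV = infsum f (F \<union> -F)" by simp
  also have "\<dots> = infsum f F + infsum f (-F)"
    by (rule infsum_Un_disjoint) (use sF assms(2) in auto)
  finally have e: "infsum f UNIV - sum f F = infsum f (-F)" using assms(2) by simp
  have nF: "(\<lambda>m. norm (f m)) summable_on (-F)"
    using summable_on_iff_abs_summable_on_complex[THEN iffD1, OF sF] .
  have g: "((\<lambda>m::int. r ^ nat \<bar>m\<bar>) has_sum (2*r/(1-r))) (-{0})" by (rule geo_int) (use assms in auto)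
  have "norm (infsum f (-F)) \<le> infsum (\<lambda>m. norm (f m)) (-F)"
    by (rule norm_infsum_bound) (rule nF)
  also have "\<dots> \<le> infsum (\<lambda>m::int. r ^ nat \<bar>m\<bar>) (-{0})"
  proof (rule infsum_mono_neutral)
    show "(\<lambda>m. norm (f m)) summable_on (-F)" by (rule nF)
    show "(\<lambda>m::int. r ^ nat \<bar>m\<bar>) summable_on (-{0})" using g by (auto simp: summable_on_def)
  qed (use bnd assms in auto)
  also have "\<dots> = 2*r/(1-r)" using g by (simp add: has_sum_iff)
  finally show ?thesis unfolding e .
qed

lemma r_small:
  assumes "Im z > 0"
  shows "\<exists>k. exp (- pi * ((2::real)^k * Im z)) < 1/3"
proof -
  obtain k where k: "3 / (pi * Im z) < (2::real)^k" using real_arch_pow[of 2 "3 / (pi * Im z)"] by auto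
  have pos: "pi * Im z > 0" using assms by simp
  have "3 < pi * ((2::real)^k * Im z)" using k pos by (simp add: field_simps)
  then have "3 < exp (pi * ((2::real)^k * Im z))"
    using exp_ge_add_one_self[of "pi * ((2::real)^k * Im z)"] by linarith
  then have "1 / exp (pi * ((2::real)^k * Im z)) < 1/3"
    by (simp add: field_simps)
  then show ?thesis by (auto simp: exp_minus field_simps)
qed

lemma Im_pow2: "Im ((2::complex)^k * z) = 2^k * Im z"
  by (induction k) (simp_all add: algebra_simps)

lemma theta4_nz_big:
  assumes "Im w > 0" "exp (- pi * Im w) < 1/3"
  shows "theta4 w \<noteq> 0"
proof
  assume t0: "theta4 w = 0"
  define r where "r = exp (- pi * Im w)"
  have r0: "0 \<le> r" "r < 1" "r < 1/3" using assms unfolding r_def by auto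
  have "norm ((\<Sum>\<^sub>\<infinity>m. sg m * tq w ((of_int m)^2)) - sum (\<lambda>m. sg m * tq w ((of_int m)^2)) {0}) \<le> 2*r/(1-r)"
  proof (rule tail_bound[OF summable_f4[OF assms(1)]])
    fix m :: int
    have "(of_int m)^2 = (of_real ((real_of_int m)^2) :: complex)" by simp
    then have "norm (tq w ((of_int m)^2)) \<le> exp (pi * Im w * 0) * r ^ nat \<bar>m\<bar>"
      unfolding r_def using norm_tq_bound[OF assms(1), of "nat \<bar>m\<bar>" 0 "(real_of_int m)^2"] int_abs_le_sq[of m] by simp
    then show "norm (sg m * tq w ((of_int m)^2)) \<le> r ^ nat \<bar>m\<bar>" by (simp add: sg_eq norm_mult)
  qed (use r0 in auto)
  moreover have "sum (\<lambda>m. sg m * tq w ((of_int m)^2)) {0} = 1" by (simp add: sg_def tq_def)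
  ultimately have "norm (theta4 w - 1) \<le> 2*r/(1-r)" unfolding theta4_tq by simp
  then have "1 \<le> 2*r/(1-r)" using t0 by simp
  then show False using r0 by (simp add: field_simps)
qed

lemma theta4_iter:
  assumes "Im z > 0" "theta4 z = 0"
  shows "theta4 ((2::complex)^k * z) = 0"
proof (induction k)
  case 0 then show ?case using assms by simp
next
  case (Suc k)
  have "Im ((2::complex)^k * z) > 0" unfolding Im_pow2 using assms by simp
  from theta34[OF this] Suc have "theta4 (2 * ((2::complex)^k * z)) ^ 2 = 0" by simp
  then show ?case by (simp add: mult.assoc)
qed

lemma theta4_nz:
  assumes "Im z > 0"
  shows "theta4 z \<noteq> 0"
proof
  assume "theta4 z = 0"
  obtain k where k: "exp (- pi * ((2::real)^k * Im z)) < 1/3" using r_small[OF assms] by auto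
  have "theta4 ((2::complex)^k * z) \<noteq> 0"
    by (rule theta4_nz_big) (use k assms in \<open>simp_all add: Im_pow2\<close>)
  with theta4_iter[OF assms \<open>theta4 z = 0\<close>] show False by blast
qed

lemma theta3_shift: "theta3 z = theta4 (z + 1)"
proof -
  have "tq z ((of_int m)^2) = sg m * tq (z+1) ((of_int m)^2)" for m :: int
  proof -
    have "tq (z+1) ((of_int m)^2) = tq z ((of_int m)^2) * exp (of_real pi * \<i> * (of_int m)^2)"
      by (simp add: tq_def exp_add[symmetric] algebra_simps)
    also have "exp (of_real pi * \<i> * (of_int m)^2) = exp (of_nat (nat (m^2)) * (of_real pi * \<i>))"
      by (simp add: algebra_simps)
    also have "\<dots> = sg m" unfolding exp_of_nat_mult sg_def by simp
    finally have "sg m * tq (z+1) ((of_int m)^2) = tq z ((of_int m)^2) * (sg m * sg m)" by (simp add: mult_ac)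
    also have "sg m * sg m = 1" by (simp add: sg_eq)
    finally show ?thesis by simp
  qed
  then show ?thesis unfolding theta3_tq theta4_tq by simp
qed

lemma theta3_nz:
  assumes "Im z > 0"
  shows "theta3 z \<noteq> 0"
  unfolding theta3_shift using theta4_nz[of "z+1"] assms by simp

lemma int_abs_le_sqp: "m \<noteq> 0 \<Longrightarrow> m \<noteq> -1 \<Longrightarrow> real (nat \<bar>m\<bar>) \<le> (real_of_int m)^2 + real_of_int m"
proof -
  assume a: "m \<noteq> 0" "m \<noteq> -1"
  have "\<bar>m\<bar> \<le> m*m + m"
  proof (cases "m > 0")
    case True
    then show ?thesis by (simp add: mult_nonneg_nonneg)
  next
    case False
    then have "m \<le> -2" using a by simp
    then have "0 \<le> (-m) * (-(m+2))" by (intro mult_nonneg_nonneg) auto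
    then show ?thesis using False by (simp add: algebra_simps)
  qed
  then have "real_of_int \<bar>m\<bar> \<le> real_of_int (m*m + m)" by linarith
  then show ?thesis by (simp add: power2_eq_square)
qed

lemma theta2_nz_big:
  assumes "Im w > 0" "exp (- pi * Im w) < 1/3"
  shows "theta2 w \<noteq> 0"
proof -
  define r where "r = exp (- pi * Im w)"
  have r0: "0 \<le> r" "r < 1" "r < 1/3" using assms unfolding r_def by auto
  define T where "T = (\<lambda>m::int. tq w ((of_int m)^2 + of_int m))"
  have c0: "tq w (1/4) \<noteq> 0" by (simp add: tq_def)
  have fe: "tq w ((of_int m + 1/2)^2) = tq w (1/4) * T m" for m :: int
    unfolding T_def tq_mult by (simp add: power2_eq_square algebra_simps)
  have "(\<lambda>m. tq w (1/4) * T m) summable_on UNIV"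
    using summable_f2[OF assms(1)] unfolding fe .
  then have sT: "T summable_on UNIV" using summable_on_cmult_right'[OF c0] by blast
  have th: "theta2 w = tq w (1/4) * infsum T UNIV"
    unfolding theta2_tq fe by (rule infsum_cmult_right')
  have "norm (infsum T UNIV - sum T {0, -1}) \<le> 2*r/(1-r)"
  proof (rule tail_bound[OF sT])
    fix m :: int assume "m \<notin> {0, -1}"
    then have m: "m \<noteq> 0" "m \<noteq> -1" by auto
    have "(of_int m)^2 + of_int m = (of_real ((real_of_int m)^2 + real_of_int m) :: complex)" by simp
    then show "norm (T m) \<le> r ^ nat \<bar>m\<bar>"
      unfolding T_def r_def using norm_tq_bound[OF assms(1), of "nat \<bar>m\<bar>" 0 "(real_of_int m)^2 + real_of_int m"] int_abs_le_sqp[OF m] by simp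
  qed (use r0 in auto)
  moreover have "sum T {0, -1} = 2" by (simp add: T_def tq_def)
  ultimately have "norm (infsum T UNIV - 2) \<le> 2*r/(1-r)" by simp
  moreover have "2*r/(1-r) < 2" using r0 by (simp add: field_simps)
  ultimately have "infsum T UNIV \<noteq> 0" by auto
  then show ?thesis unfolding th using c0 by simp
qed

lemma theta2_iter:
  assumes "Im z > 0" "theta2 z = 0"
  shows "theta2 ((2::complex)^k * z) = 0"
proof (induction k)
  case 0 then show ?case using assms by simp
next
  case (Suc k)
  have p: "Im ((2::complex)^k * z) > 0" unfolding Im_pow2 using assms by simp
  have p2: "Im (2 * ((2::complex)^k * z)) > 0" using p by simp
  from theta2_sq[OF p] Suc have "2 * theta2 (2 * ((2::complex)^k * z)) * theta3 (2 * ((2::complex)^k * z)) = 0" by simp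
  with theta3_nz[OF p2] have "theta2 (2 * ((2::complex)^k * z)) = 0" by simp
  then show ?case by (simp add: mult.assoc)
qed

lemma theta2_nz:
  assumes "Im z > 0"
  shows "theta2 z \<noteq> 0"
proof
  assume "theta2 z = 0"
  obtain k where k: "exp (- pi * ((2::real)^k * Im z)) < 1/3" using r_small[OF assms] by auto
  have "theta2 ((2::complex)^k * z) \<noteq> 0"
    by (rule theta2_nz_big) (use k assms in \<open>simp_all add: Im_pow2\<close>)
  with theta2_iter[OF assms \<open>theta2 z = 0\<close>] show False by blast
qed


theorem theorem2p4:
  fixes z :: complex and n :: nat
  assumes "Im z > 0" and "n \<ge> 1"
  shows "rho n z = (\<Sum>i=0..n div 3.
           (of_nat (2*n+3) / of_nat (2*i+1)) * of_nat ((n - i) choose (2*i)) * 2^(8*i)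
           * Delta24 z ^ i * E4 z ^ (n - 3*i))"
proof -
  define a where "a = theta2 z ^ 4"
  define b where "b = theta4 z ^ 4"
  have a0: "a \<noteq> 0" unfolding a_def using theta2_nz[OF assms(1)] by simp
  have b0: "b \<noteq> 0" unfolding b_def using theta4_nz[OF assms(1)] by simp
  have c: "theta3 z ^ 4 = a + b" unfolding a_def b_def by (rule jacobi[OF assms(1)])
  have c0: "a + b \<noteq> 0" using theta3_nz[OF assms(1)] c by (metis power_not_zero)
  have pw: "x ^ (8*(n+1)+4) = (x^4)^(2*n+3)" for x :: complex
    by (simp add: power_mult[symmetric] algebra_simps)
  have den: "(theta2 z * theta3 z * theta4 z) ^ 4 = a * b * (a+b)"
  proof -
    have "(theta2 z * theta3 z * theta4 z) ^ 4 = theta2 z^4 * theta4 z^4 * theta3 z^4"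
      by (simp only: power_mult_distrib mult_ac)
    then show ?thesis unfolding c a_def b_def .
  qed
  have lhs: "rho n z = ((a+b)^(2*n+3) - a^(2*n+3) - b^(2*n+3)) / (a*b*(a+b))"
    unfolding rho_def pw den c a_def[symmetric] b_def[symmetric] ..
  have E: "E4 z = a^2 + a*b + b^2"
  proof -
    have "E4 z = ((theta2 z^4)^2 + (theta3 z^4)^2 + (theta4 z^4)^2) / 2"
      unfolding E4_def by (simp add: power_mult[symmetric])
    also have "\<dots> = (a^2 + (a+b)^2 + b^2) / 2"
      by (simp only: c a_def[symmetric] b_def[symmetric])
    also have "\<dots> = a^2 + a*b + b^2" by (simp add: power2_eq_square field_simps)
    finally show ?thesis .
  qed
  have D: "2^(8*i) * Delta24 z ^ i = (a*b*(a+b))^(2*i)" for i :: nat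
  proof -
    have "2^(8*i) * Delta24 z ^ i = (2^8 * Delta24 z) ^ i" by (simp add: power_mult power_mult_distrib)
    also have "2^8 * Delta24 z = (theta2 z * theta3 z * theta4 z) ^ 8"
      unfolding Delta24_def by (simp add: power_divide)
    also have "\<dots> = ((theta2 z * theta3 z * theta4 z) ^ 4) ^ 2" by (simp add: power_mult[symmetric])
    finally show ?thesis unfolding den by (simp add: power_mult)
  qed
  show ?thesis
    unfolding lhs alg_main[OF a0 b0 c0]
  proof (rule sum.cong[OF refl])
    fix i
    show "(of_nat (2*n+3) / of_nat (2*i+1)) * of_nat ((n - i) choose (2*i)) * (a*b*(a+b))^(2*i) * (a^2+a*b+b^2)^(n-3*i)
      = (of_nat (2*n+3) / of_nat (2*i+1)) * of_nat ((n - i) choose (2*i)) * 2^(8*i) * Delta24 z ^ i * E4 z ^ (n - 3*i)"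
      unfolding E D[symmetric] by (simp only: mult.assoc)
  qed
qed

end
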